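(* Let $p$ and $q$ be positive integers, let $m_1<m_2<\cdots<m_q$ be positive integers and let $v_1,\dots,v_q$ be positive integers. Let $A_n$ be the number of ways to tile an $n$-board using $v_i$ colours of $(1,p-1;m_i)$-combs for $i=1,\ldots,q$. Define $s_n$ by $s_n=v_1s_{n-m_1}+\cdots+v_qs_{n-m_q}+\delta_{n,0}$ for $n\ge 0$ and $s_n=0$ for $n<0$. Then for all $n\ge0$ and all $r=0,\ldots,p-1$, \[ A_{pn+r}=s_n^{p-r}s_{n+1}^r . \]
   Context: An $n$-board is the strip $[0,n]\times[0,1]$ divided into $n$ unit square cells. A $(w,g;m)$-comb is a tile consisting of a row of $m$ rectangles (teeth) of size $w\times 1$, consecutive teeth separated by a gap of width $g$; the gaps are not part of the tile and may be occupied by other tiles. A tiling of a board is a placement of translated (unrotated) copies of tiles so that the teeth cover the board exactly with no overlaps; tiles of the same shape but different colours are distinguished. $\delta_{i,j}$ equals $1$ if $i=j$ and $0$ otherwise. *)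

theory Defs
  imports Main
begin

text \<open>Cell j of the n-board is the unit square [j,j+1] x [0,1], j < n.
  A (1,p-1;m)-comb placed with its first tooth on cell x covers the cells
  x, x+p, ..., x+(m-1)p (teeth of width 1, gaps of width p-1).\<close>
definition comb_cells :: "nat \<Rightarrow> nat \<Rightarrow> nat \<Rightarrow> nat set" where
  "comb_cells p m x = (\<lambda>k. x + k * p) ` {..<m}"

text \<open>A placed tile is a triple (i, c, x): a comb of kind i (with m i teeth),
  colour c < v i, first tooth on cell x.\<close>
definition placed_cells :: "nat \<Rightarrow> (nat \<Rightarrow> nat) \<Rightarrow> nat \<times> nat \<times> nat \<Rightarrow> nat set" where
  "placed_cells p m t = (case t of (i, c, x) \<Rightarrow> comb_cells p (m i) x)"

definition comb_tilings ::
  "nat \<Rightarrow> nat \<Rightarrow> (nat \<Rightarrow> nat) \<Rightarrow> (nat \<Rightarrow> nat) \<Rightarrow> nat \<Rightarrow> (nat \<times> nat \<times> nat) set set" where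
  "comb_tilings p q m v n =
     {T. finite T \<and>
         (\<forall>(i, c, x) \<in> T. 1 \<le> i \<and> i \<le> q \<and> c < v i) \<and>
         (\<forall>t\<in>T. \<forall>u\<in>T. t \<noteq> u \<longrightarrow> placed_cells p m t \<inter> placed_cells p m u = {}) \<and>
         (\<Union>t\<in>T. placed_cells p m t) = {0..<n}}"

definition num_comb_tilings :: "nat \<Rightarrow> nat \<Rightarrow> (nat \<Rightarrow> nat) \<Rightarrow> (nat \<Rightarrow> nat) \<Rightarrow> nat \<Rightarrow> nat" where
  "num_comb_tilings p q m v n = card (comb_tilings p q m v n)"

end

theory Submission imports Defs begin

definition tilings :: "nat \<Rightarrow> nat \<Rightarrow> (nat \<Rightarrow> nat) \<Rightarrow> (nat \<Rightarrow> nat) \<Rightarrow> nat set \<Rightarrow> (nat \<times> nat \<times> nat) set set" where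
  "tilings p q m v S = {T. finite T \<and>
         (\<forall>(i, c, x) \<in> T. 1 \<le> i \<and> i \<le> q \<and> c < v i) \<and>
         (\<forall>t\<in>T. \<forall>u\<in>T. t \<noteq> u \<longrightarrow> placed_cells p m t \<inter> placed_cells p m u = {}) \<and>
         (\<Union>t\<in>T. placed_cells p m t) = S}"

lemma comb_tilings_eq: "comb_tilings p q m v n = tilings p q m v {0..<n}"
  by (simp add: comb_tilings_def tilings_def)

definition tiles :: "nat \<Rightarrow> (nat \<Rightarrow> nat) \<Rightarrow> nat set \<Rightarrow> (nat \<times> nat \<times> nat) set" where
  "tiles q v S = {(i,c,x). 1 \<le> i \<and> i \<le> q \<and> c < v i \<and> x \<in> S}"

lemma finite_tiles: "finite S \<Longrightarrow> finite (tiles q v S)"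
proof -
  assume S: "finite S"
  have "tiles q v S \<subseteq> (\<lambda>((i,c),x). (i,c,x)) ` ((SIGMA i:{1..q}. {..<v i}) \<times> S)"
    by (force simp: tiles_def image_iff)
  moreover have "finite ((SIGMA i:{1..q}. {..<v i}) \<times> S)" using S by auto
  ultimately show ?thesis by (meson finite_imageI finite_subset)
qed

lemma start_in: "0 < m i \<Longrightarrow> x \<in> placed_cells p m (i,c,x)"
  by (force simp: placed_cells_def comb_cells_def image_iff)

lemma comb_char: "0 < p \<Longrightarrow> comb_cells p n y =
   {z. z mod p = y mod p \<and> y div p \<le> z div p \<and> z div p < y div p + n}"
proof (safe)
  assume p: "0 < p"
  fix z assume "z \<in> comb_cells p n y"
  then obtain k where k: "k < n" "z = y + k * p" by (auto simp: comb_cells_def)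
  then show "z mod p = y mod p" "y div p \<le> z div p" "z div p < y div p + n"
    using p by auto
next
  assume p: "0 < p"
  fix z assume a: "z mod p = y mod p" "y div p \<le> z div p" "z div p < y div p + n"
  have e1: "z = p * (z div p) + z mod p" by simp
  have e2: "y = p * (y div p) + y mod p" by simp
  have e3: "z div p = y div p + (z div p - y div p)" using a by simp
  have "z = y + (z div p - y div p) * p"
    using e1 e2 e3 a(1) by (metis add.commute add.left_commute distrib_left mult.commute)
  moreover have "z div p - y div p < n" using a by auto
  ultimately show "z \<in> comb_cells p n y" unfolding comb_cells_def by blast
qed

definition Eset :: "nat \<Rightarrow> nat \<Rightarrow> (nat \<Rightarrow> nat) \<Rightarrow> (nat \<Rightarrow> nat) \<Rightarrow> nat set \<Rightarrow> nat \<Rightarrow> (nat \<times> nat \<times> nat) set" where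
  "Eset p q m v S b = {t \<in> tiles q v S. b \<in> placed_cells p m t \<and> placed_cells p m t \<subseteq> S}"

context
  fixes p q :: nat and m v :: "nat \<Rightarrow> nat"
  assumes mpos: "\<And>i. 1 \<le> i \<Longrightarrow> i \<le> q \<Longrightarrow> m i > 0"
begin

lemma tiling_sub: "T \<in> tilings p q m v S \<Longrightarrow> T \<subseteq> tiles q v S"
proof
  fix t assume T: "T \<in> tilings p q m v S" and t: "t \<in> T"
  obtain i c x where tt: "t = (i,c,x)" by (cases t) auto
  have val: "1 \<le> i" "i \<le> q" "c < v i" using T t tt unfolding tilings_def by auto
  have "x \<in> placed_cells p m t" using start_in[of m i x p c] mpos val tt by auto
  then have "x \<in> S" using T t unfolding tilings_def by auto
  then show "t \<in> tiles q v S" using val tt by (simp add: tiles_def)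
qed

lemma finite_tilings: "finite S \<Longrightarrow> finite (tilings p q m v S)"
proof -
  assume S: "finite S"
  have "tilings p q m v S \<subseteq> Pow (tiles q v S)" using tiling_sub by auto
  then show ?thesis using finite_tiles[OF S] by (meson finite_Pow_iff finite_subset)
qed

lemma insert_tiling:
  assumes "t \<in> tiles q v S" "placed_cells p m t \<subseteq> S"
    and "T \<in> tilings p q m v (S - placed_cells p m t)"
  shows "insert t T \<in> tilings p q m v S"
proof -
  have "\<forall>u\<in>T. placed_cells p m u \<subseteq> S - placed_cells p m t"
    using assms(3) unfolding tilings_def by blast
  then show ?thesis using assms unfolding tilings_def tiles_def by auto
qed

lemma remove_tiling:
  assumes T: "T \<in> tilings p q m v S" and t: "t \<in> T"
  shows "T - {t} \<in> tilings p q m v (S - placed_cells p m t)"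
proof -
  have d: "\<forall>u\<in>T. u \<noteq> t \<longrightarrow> placed_cells p m t \<inter> placed_cells p m u = {}"
    using T t unfolding tilings_def by blast
  have U: "(\<Union>u\<in>T. placed_cells p m u) = S" using T unfolding tilings_def by blast
  have "(\<Union>u\<in>T-{t}. placed_cells p m u) = S - placed_cells p m t"
  proof
    show "(\<Union>u\<in>T-{t}. placed_cells p m u) \<subseteq> S - placed_cells p m t"
      using d U by blast
    show "S - placed_cells p m t \<subseteq> (\<Union>u\<in>T-{t}. placed_cells p m u)"
      using U by blast
  qed
  then show ?thesis using T unfolding tilings_def by auto
qed


lemma split_tilings:
  assumes b: "b \<in> S"
  shows "tilings p q m v S = (\<Union>t\<in>Eset p q m v S b. insert t ` tilings p q m v (S - placed_cells p m t))"
proof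
  show "tilings p q m v S \<subseteq> (\<Union>t\<in>Eset p q m v S b. insert t ` tilings p q m v (S - placed_cells p m t))"
  proof
    fix T assume T: "T \<in> tilings p q m v S"
    then obtain t where t: "t \<in> T" "b \<in> placed_cells p m t"
      using b unfolding tilings_def by blast
    have "placed_cells p m t \<subseteq> S" using T t unfolding tilings_def by blast
    moreover have "t \<in> tiles q v S" using tiling_sub[OF T] t by blast
    ultimately have tE: "t \<in> Eset p q m v S b" using t unfolding Eset_def by blast
    have "T = insert t (T - {t})" using t by blast
    then show "T \<in> (\<Union>t\<in>Eset p q m v S b. insert t ` tilings p q m v (S - placed_cells p m t))"
      using tE remove_tiling[OF T t(1)] by blast
  qed
  show "(\<Union>t\<in>Eset p q m v S b. insert t ` tilings p q m v (S - placed_cells p m t)) \<subseteq> tilings p q m v S"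
    using insert_tiling unfolding Eset_def by blast
qed

lemma card_split:
  assumes S: "finite S" and b: "b \<in> S"
  shows "card (tilings p q m v S) = (\<Sum>t\<in>Eset p q m v S b. card (tilings p q m v (S - placed_cells p m t)))"
proof -
  have fE: "finite (Eset p q m v S b)" using finite_tiles[OF S] unfolding Eset_def by auto
  have sub: "insert t ` tilings p q m v (S - placed_cells p m t) \<subseteq> tilings p q m v S"
    if "t \<in> Eset p q m v S b" for t
    using insert_tiling that unfolding Eset_def by blast
  have disj: "(insert t1 ` tilings p q m v (S - placed_cells p m t1)) \<inter>
              (insert t2 ` tilings p q m v (S - placed_cells p m t2)) = {}"
    if "t1 \<in> Eset p q m v S b" "t2 \<in> Eset p q m v S b" "t1 \<noteq> t2" for t1 t2
  proof (rule ccontr)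
    assume "\<not> ?thesis"
    then obtain T where T1: "T \<in> insert t1 ` tilings p q m v (S - placed_cells p m t1)"
      and T2: "T \<in> insert t2 ` tilings p q m v (S - placed_cells p m t2)" by blast
    have TS: "T \<in> tilings p q m v S" using sub[OF that(1)] T1 by blast
    have "t1 \<in> T" "t2 \<in> T" using T1 T2 by auto
    moreover have "b \<in> placed_cells p m t1" "b \<in> placed_cells p m t2" using that unfolding Eset_def by auto
    ultimately show False using TS that(3) unfolding tilings_def by blast
  qed
  have inj: "inj_on (insert t) (tilings p q m v (S - placed_cells p m t))"
    if "t \<in> Eset p q m v S b" for t
  proof (rule inj_onI)
    fix A B assume A: "A \<in> tilings p q m v (S - placed_cells p m t)"
      and B: "B \<in> tilings p q m v (S - placed_cells p m t)" and e: "insert t A = insert t B"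
    have bt: "b \<in> placed_cells p m t" using that unfolding Eset_def by auto
    have "t \<notin> A" using A bt unfolding tilings_def by blast
    moreover have "t \<notin> B" using B bt unfolding tilings_def by blast
    ultimately show "A = B" using e insert_ident by metis
  qed
  have "card (tilings p q m v S) = card (\<Union>t\<in>Eset p q m v S b. insert t ` tilings p q m v (S - placed_cells p m t))"
    using split_tilings[OF b] by simp
  also have "\<dots> = (\<Sum>t\<in>Eset p q m v S b. card (insert t ` tilings p q m v (S - placed_cells p m t)))"
  proof (rule card_UN_disjoint[OF fE])
    show "\<forall>t\<in>Eset p q m v S b. finite (insert t ` tilings p q m v (S - placed_cells p m t))"
      using finite_tilings S by auto
    show "\<forall>t1\<in>Eset p q m v S b. \<forall>t2\<in>Eset p q m v S b. t1 \<noteq> t2 \<longrightarrow>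
      insert t1 ` tilings p q m v (S - placed_cells p m t1) \<inter> insert t2 ` tilings p q m v (S - placed_cells p m t2) = {}"
      using disj by blast
  qed
  also have "\<dots> = (\<Sum>t\<in>Eset p q m v S b. card (tilings p q m v (S - placed_cells p m t)))"
    using inj by (intro sum.cong refl card_image) auto
  finally show ?thesis .
qed

lemma tilings_empty: "tilings p q m v {} = {{}}"
proof -
  have "T = {}" if "T \<in> tilings p q m v {}" for T
    using tiling_sub[OF that] unfolding tiles_def by auto
  moreover have "{} \<in> tilings p q m v {}" unfolding tilings_def by auto
  ultimately show ?thesis by blast
qed

end


definition board :: "nat \<Rightarrow> (nat \<Rightarrow> nat) \<Rightarrow> nat set" where
  "board p L = {y. y div p < L (y mod p)}"

lemma finite_board: "0 < p \<Longrightarrow> finite (board p L)"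
proof -
  assume p: "0 < p"
  define M where "M = (\<Sum>j<p. L j)"
  have "board p L \<subseteq> {..<p * M}"
  proof
    fix y assume "y \<in> board p L"
    then have "y div p < L (y mod p)" by (simp add: board_def)
    moreover have "L (y mod p) \<le> M" unfolding M_def
      using p by (intro member_le_sum) auto
    ultimately have "y div p < M" by simp
    then show "y \<in> {..<p * M}" using p
      by (simp add: div_less_iff_less_mult mult.commute)
  qed
  then show ?thesis using finite_subset by blast
qed

lemma sum_upd: "r < (p::nat) \<Longrightarrow> (\<Sum>j<p. ((L::nat\<Rightarrow>nat)(r := a)) j) = (\<Sum>j<p. L j) - L r + a"

proof -
  assume r: "r < p"
  have "(\<Sum>j<p. (L(r := a)) j) = (L(r := a)) r + (\<Sum>j\<in>{..<p}-{r}. (L(r := a)) j)"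
    using r by (intro sum.remove) auto
  also have "\<dots> = a + (\<Sum>j\<in>{..<p}-{r}. L j)"
    by (auto intro: sum.cong)
  finally have "(\<Sum>j<p. (L(r := a)) j) = a + (\<Sum>j\<in>{..<p}-{r}. L j)" .
  moreover have "(\<Sum>j<p. L j) = L r + (\<Sum>j\<in>{..<p}-{r}. L j)"
    using r by (intro sum.remove) auto
  ultimately show ?thesis by simp
qed

lemma board_minus:
  assumes "0 < p" "r < p" "k \<le> L r"
  shows "board p L - comb_cells p k (r + p * (L r - k)) = board p (L(r := L r - k))"
  using assms by (auto simp: board_def comb_char)


context
  fixes p q :: nat and m v :: "nat \<Rightarrow> nat" and s :: "int \<Rightarrow> nat"
  assumes p: "0 < p"
    and mpos: "\<And>i. 1 \<le> i \<Longrightarrow> i \<le> q \<Longrightarrow> m i > 0"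
    and s_neg: "\<And>k. k < 0 \<Longrightarrow> s k = 0"
    and s_rec: "\<And>k. k \<ge> 0 \<Longrightarrow>
           s k = (\<Sum>i=1..q. v i * s (k - int (m i))) + (if k = 0 then 1 else 0)"
begin

lemma s0: "s 0 = 1"
proof -
  have "(\<Sum>i=1..q. v i * s (0 - int (m i))) = 0"
    using mpos s_neg by (intro sum.neutral) auto
  then show ?thesis using s_rec[of 0] by simp
qed

lemma main: "card (tilings p q m v (board p L)) = (\<Prod>j<p. s (int (L j)))"
proof (induction "\<Sum>j<p. L j" arbitrary: L rule: less_induct)
  case less
  show ?case
  proof (cases "\<exists>r<p. 0 < L r")
    case False
    have "L (y mod p) = 0" for y using False p by (meson mod_less_divisor not_gr_zero)
    then have "board p L = {}" unfolding board_def by auto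
    then have "card (tilings p q m v (board p L)) = 1" using tilings_empty[OF mpos] by simp
    moreover have "(\<Prod>j<p. s (int (L j))) = 1" using False s0 by simp
    ultimately show ?thesis by simp
  next
    case True
    then obtain r where r: "r < p" "0 < L r" by blast
    define b where "b = r + p * (L r - 1)"
    define x where "x i = r + p * (L r - m i)" for i
    define A where "A = {i\<in>{1..q}. m i \<le> L r}"
    define I where "I = (SIGMA i:A. {..<v i})"
    define P where "P = (\<Prod>j\<in>{..<p}-{r}. s (int (L j)))"
    have bmod: "b mod p = r" "b div p = L r - 1" using r p by (auto simp: b_def)
    have xmod: "x i mod p = r" "x i div p = L r - m i" for i using r p by (auto simp: x_def)
    have bin: "b \<in> board p L" using bmod r by (simp add: board_def)
    have E: "Eset p q m v (board p L) b = (\<lambda>(i,c). (i,c,x i)) ` I"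
    proof
      show "Eset p q m v (board p L) b \<subseteq> (\<lambda>(i,c). (i,c,x i)) ` I"
      proof
        fix t assume t: "t \<in> Eset p q m v (board p L) b"
        obtain i c y where ty: "t = (i,c,y)" by (cases t) auto
        have val: "1 \<le> i" "i \<le> q" "c < v i" and yb: "y \<in> board p L"
          and bc: "b \<in> comb_cells p (m i) y" and cb: "comb_cells p (m i) y \<subseteq> board p L"
          using t ty by (auto simp: Eset_def tiles_def placed_cells_def)
        have mi: "0 < m i" using mpos val by auto
        have cc: "comb_cells p (m i) y = {z. z mod p = y mod p \<and> y div p \<le> z div p \<and> z div p < y div p + m i}"
          using comb_char[OF p] .
        have ym: "y mod p = r" "y div p \<le> L r - 1" "L r - 1 < y div p + m i"
          using bc bmod unfolding cc by auto
        define z where "z = r + p * (y div p + m i - 1)"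
        have zm: "z mod p = r" "z div p = y div p + m i - 1" using r p by (auto simp: z_def)
        have "z \<in> comb_cells p (m i) y" unfolding cc using zm ym mi by auto
        then have "z \<in> board p L" using cb by blast
        then have "y div p + m i - 1 < L r" using zm by (simp add: board_def)
        then have e: "y div p + m i = L r" using ym mi by linarith
        then have "y = x i" using ym(1) unfolding x_def
          by (metis add_diff_cancel_right' div_mult_mod_eq add.commute mult.commute)
        moreover have "(i, c) \<in> I" using val e unfolding I_def A_def by auto
        ultimately show "t \<in> (\<lambda>(i,c). (i,c,x i)) ` I" using ty by force
      qed
      show "(\<lambda>(i,c). (i,c,x i)) ` I \<subseteq> Eset p q m v (board p L) b"
      proof
        fix t assume "t \<in> (\<lambda>(i,c). (i,c,x i)) ` I"
        then obtain i c where ic: "(i,c) \<in> I" "t = (i,c,x i)" by auto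
        have val: "1 \<le> i" "i \<le> q" "c < v i" "m i \<le> L r" using ic unfolding I_def A_def by auto
        have mi: "0 < m i" using mpos val by auto
        have cc: "comb_cells p (m i) (x i) = {z. z mod p = r \<and> L r - m i \<le> z div p \<and> z div p < L r}"
          using comb_char[OF p] xmod val by simp
        have "x i \<in> board p L" using xmod mi r(2) by (simp add: board_def)
        moreover have "b \<in> comb_cells p (m i) (x i)" unfolding cc using bmod val mi r by auto
        moreover have "comb_cells p (m i) (x i) \<subseteq> board p L" unfolding cc by (auto simp: board_def)
        ultimately show "t \<in> Eset p q m v (board p L) b"
          using ic val by (auto simp: Eset_def tiles_def placed_cells_def)
      qed
    qed
    have inj: "inj_on (\<lambda>(i,c). (i,c,x i)) I" by (auto simp: inj_on_def)
    have fA: "finite A" unfolding A_def by auto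
    have "card (tilings p q m v (board p L)) =
        (\<Sum>t\<in>Eset p q m v (board p L) b. card (tilings p q m v (board p L - placed_cells p m t)))"
      by (rule card_split[OF mpos finite_board[OF p] bin])
    also have "\<dots> = (\<Sum>(i,c)\<in>I. card (tilings p q m v (board p L - comb_cells p (m i) (x i))))"
      unfolding E sum.reindex[OF inj] by (simp add: case_prod_beta placed_cells_def)
    also have "\<dots> = (\<Sum>(i,c)\<in>I. s (int (L r) - int (m i)) * P)"
    proof (rule sum.cong[OF refl], clarify)
      fix i c assume "(i, c) \<in> I"
      then have val: "1 \<le> i" "i \<le> q" "m i \<le> L r" unfolding I_def A_def by auto
      have mi: "0 < m i" using mpos val by auto
      have bm: "board p L - comb_cells p (m i) (x i) = board p (L(r := L r - m i))"
        unfolding x_def using board_minus[of p r "m i" L, OF p r(1) val(3)] .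
      have le: "L r \<le> (\<Sum>j<p. L j)" using r by (intro member_le_sum) auto
      have "(\<Sum>j<p. (L(r := L r - m i)) j) = (\<Sum>j<p. L j) - L r + (L r - m i)"
        by (rule sum_upd[OF r(1)])
      then have "(\<Sum>j<p. (L(r := L r - m i)) j) < (\<Sum>j<p. L j)"
        using le mi val by linarith
      then have "card (tilings p q m v (board p (L(r := L r - m i)))) = (\<Prod>j<p. s (int ((L(r := L r - m i)) j)))"
        by (rule less)
      also have "\<dots> = s (int (L r - m i)) * (\<Prod>j\<in>{..<p}-{r}. s (int ((L(r := L r - m i)) j)))"
        using r by (subst prod.remove[of _ r]) auto
      also have "\<dots> = s (int (L r) - int (m i)) * P"
        unfolding P_def using val by (auto intro!: prod.cong simp: of_nat_diff)
      finally show "card (tilings p q m v (board p L - comb_cells p (m i) (x i))) = s (int (L r) - int (m i)) * P"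
        using bm by simp
    qed
    also have "\<dots> = (\<Sum>i\<in>A. \<Sum>c<v i. s (int (L r) - int (m i)) * P)"
      unfolding I_def using fA by (subst sum.Sigma) auto
    also have "\<dots> = (\<Sum>i\<in>A. v i * s (int (L r) - int (m i))) * P"
      by (simp add: sum_distrib_right mult.assoc)
    also have "\<dots> = (\<Sum>i=1..q. v i * s (int (L r) - int (m i))) * P"
    proof -
      have "(\<Sum>i\<in>A. v i * s (int (L r) - int (m i))) = (\<Sum>i=1..q. v i * s (int (L r) - int (m i)))"
      proof (rule sum.mono_neutral_left)
        show "\<forall>i\<in>{1..q} - A. v i * s (int (L r) - int (m i)) = 0"
        proof
          fix i assume "i \<in> {1..q} - A"
          then have "int (L r) - int (m i) < 0" unfolding A_def by auto
          then show "v i * s (int (L r) - int (m i)) = 0" using s_neg by simp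
        qed
      qed (auto simp: A_def)
      then show ?thesis by simp
    qed
    also have "\<dots> = s (int (L r)) * P" using s_rec[of "int (L r)"] r by simp
    also have "\<dots> = (\<Prod>j<p. s (int (L j)))"
      unfolding P_def using r by (subst (2) prod.remove[of _ r]) auto
    finally show ?thesis .
  qed
qed


lemma prod_final: "r < p \<Longrightarrow> (\<Prod>j<p. s (int (if j < r then n + 1 else n))) = s (int n) ^ (p - r) * s (int n + 1) ^ r"
proof -
  assume r: "r < p"
  have sn: "s (int (n + 1)) = s (int n + 1)" by (simp only: of_nat_add of_nat_1)
  have "(\<Prod>j<p. s (int (if j < r then n + 1 else n))) =
     (\<Prod>j\<in>{0..<r}. s (int (if j < r then n + 1 else n))) * (\<Prod>j\<in>{r..<p}. s (int (if j < r then n + 1 else n)))"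
    unfolding lessThan_atLeast0 using r by (intro prod.atLeastLessThan_concat[symmetric]) auto
  also have "\<dots> = (\<Prod>j\<in>{0..<r}. s (int n + 1)) * (\<Prod>j\<in>{r..<p}. s (int n))"
    using sn by (intro arg_cong2[where f="(*)"] prod.cong) auto
  also have "\<dots> = s (int n) ^ (p - r) * s (int n + 1) ^ r" by simp
  finally show ?thesis .
qed

end

lemma board_eq: assumes p: "0 < p" and r: "r < p"
  shows "board p (\<lambda>j. if j < r then n + 1 else n) = {0..<p * n + r}"
proof (rule set_eqI)
  fix y
  define d where "d = y div p"
  define e where "e = y mod p"
  have y: "y = p * d + e" unfolding d_def e_def by simp
  have e: "e < p" unfolding e_def using p by simp
  have B: "y \<in> board p (\<lambda>j. if j < r then n + 1 else n) \<longleftrightarrow> d < (if e < r then n + 1 else n)"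
    by (simp add: board_def d_def e_def)
  have C: "y \<in> {0..<p * n + r} \<longleftrightarrow> p * d + e < p * n + r"
    by (subst y) simp
  show "y \<in> board p (\<lambda>j. if j < r then n + 1 else n) \<longleftrightarrow> y \<in> {0..<p * n + r}"
  proof (cases "e < r")
    case True
    have "d < n + 1 \<longleftrightarrow> p * d + e < p * n + r"
    proof
      assume "d < n + 1"
      then have "p * d \<le> p * n" by simp
      then show "p * d + e < p * n + r" using True by linarith
    next
      assume a: "p * d + e < p * n + r"
      show "d < n + 1"
      proof (rule ccontr)
        assume "\<not> d < n + 1"
        then have "n + 1 \<le> d" by simp
        then have "p * (n + 1) \<le> p * d" by (rule mult_le_mono2)
        then show False using a r by (simp add: algebra_simps)
      qed
    qed
    then show ?thesis using True B C by simp
  next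
    case False
    have "d < n \<longleftrightarrow> p * d + e < p * n + r"
    proof
      assume "d < n"
      then have "p * (d + 1) \<le> p * n" by (metis Suc_eq_plus1 Suc_leI mult_le_mono2)
      then show "p * d + e < p * n + r" using e by (simp add: algebra_simps)
    next
      assume a: "p * d + e < p * n + r"
      show "d < n"
      proof (rule ccontr)
        assume "\<not> d < n"
        then have "p * n \<le> p * d" by simp
        then show False using a False by linarith
      qed
    qed
    then show ?thesis using False B C by simp
  qed
qed

theorem theorem2:
  fixes p q :: nat and m v :: "nat \<Rightarrow> nat" and s :: "int \<Rightarrow> nat"
  assumes "p > 0" and "q > 0"
    and "\<And>i. 1 \<le> i \<Longrightarrow> i \<le> q \<Longrightarrow> m i > 0"
    and "\<And>i j. 1 \<le> i \<Longrightarrow> i < j \<Longrightarrow> j \<le> q \<Longrightarrow> m i < m j"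
    and "\<And>i. 1 \<le> i \<Longrightarrow> i \<le> q \<Longrightarrow> v i > 0"
    and "\<And>k. k < 0 \<Longrightarrow> s k = 0"
    and "\<And>k. k \<ge> 0 \<Longrightarrow>
           s k = (\<Sum>i=1..q. v i * s (k - int (m i))) + (if k = 0 then 1 else 0)"
  shows "\<forall>n r. r < p \<longrightarrow>
           num_comb_tilings p q m v (p * n + r) = s (int n) ^ (p - r) * s (int n + 1) ^ r"
proof (intro allI impI)
  fix n r assume r: "r < p"
  have "num_comb_tilings p q m v (p * n + r) = card (tilings p q m v (board p (\<lambda>j. if j < r then n + 1 else n)))"
    unfolding num_comb_tilings_def comb_tilings_eq board_eq[OF assms(1) r] ..
  also have "\<dots> = (\<Prod>j<p. s (int (if j < r then n + 1 else n)))"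
    by (rule main[OF assms(1) assms(3) assms(6) assms(7)])
  also have "\<dots> = s (int n) ^ (p - r) * s (int n + 1) ^ r"
    using prod_final[OF assms(1) assms(3) assms(6) assms(7) r] .
  finally show "num_comb_tilings p q m v (p * n + r) = s (int n) ^ (p - r) * s (int n + 1) ^ r" .
qed

end
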